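(* Let $C\ge 0$, let $D_1,\dots,D_n\subseteq\mathbb{Z}$ each be a nonempty finite set of consecutive integers, let $D^n=D_1\times\cdots\times D_n$, and let $(D^n,f)$ be an Ameso($C$) pair. Let $1\le j\le n$ and let $i_1,\dots,i_j\in\{1,\dots,n\}$ be distinct. Define $\Delta^j_{i_1,\dots,i_j}=D_{i_1}\times\cdots\times D_{i_j}$ and, for $(x_{i_1},\dots,x_{i_j})\in\Delta^j_{i_1,\dots,i_j}$, the conditional function $f^*_{i_1,\dots,i_j}(x_{i_1},\dots,x_{i_j})=\min\{f(\vec y):\vec y=(y_1,\dots,y_n)\in D^n,\ y_{i_k}=x_{i_k}\ \text{for } k=1,\dots,j\}$. Then $(\Delta^j_{i_1,\dots,i_j},f^*_{i_1,\dots,i_j})$ is a $j$-dimensional Ameso($C$) pair.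
   Context: Floors and ceilings of vectors are taken componentwise. A set $D^n\subseteq\mathbb{Z}^n$ is an Ameso set if $\lceil(\vec x+\vec y)/2\rceil,\lfloor(\vec x+\vec y)/2\rfloor\in D^n$ for all $\vec x,\vec y\in D^n$. For $C\ge 0$, $(D^n,f)$ is an Ameso($C$) pair if $D^n$ is an Ameso set, $f:D^n\to\mathbb{R}$ is bounded below, and $f(\vec x)+f(\vec y)+C\ge f(\lceil(\vec x+\vec y)/2\rceil)+f(\lfloor(\vec x+\vec y)/2\rfloor)$ for all $\vec x,\vec y\in D^n$. *)

theory Defs
  imports Complex_Main
begin

text \<open>Vectors of \<int>^n are represented as integer lists of length n (0-based indices).
  Componentwise ceiling / floor of the midpoint (x+y)/2.\<close>

definition ceil_mid :: "int list \<Rightarrow> int list \<Rightarrow> int list" where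
  "ceil_mid x y = map2 (\<lambda>a b. \<lceil>real_of_int (a + b) / 2\<rceil>) x y"

definition floor_mid :: "int list \<Rightarrow> int list \<Rightarrow> int list" where
  "floor_mid x y = map2 (\<lambda>a b. \<lfloor>real_of_int (a + b) / 2\<rfloor>) x y"

definition ameso_set :: "int list set \<Rightarrow> bool" where
  "ameso_set D \<longleftrightarrow> (\<forall>x\<in>D. \<forall>y\<in>D. ceil_mid x y \<in> D \<and> floor_mid x y \<in> D)"

definition ameso_pair :: "real \<Rightarrow> int list set \<Rightarrow> (int list \<Rightarrow> real) \<Rightarrow> bool" where
  "ameso_pair C D f \<longleftrightarrow> ameso_set D \<and> bdd_below (f ` D) \<and>
     (\<forall>x\<in>D. \<forall>y\<in>D. f x + f y + C \<ge> f (ceil_mid x y) + f (floor_mid x y))"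

definition prod_dom :: "nat \<Rightarrow> (nat \<Rightarrow> int set) \<Rightarrow> int list set" where
  "prod_dom n Ds = {x. length x = n \<and> (\<forall>k<n. x ! k \<in> Ds k)}"

definition cond_fun :: "int list set \<Rightarrow> (int list \<Rightarrow> real) \<Rightarrow> nat list \<Rightarrow> int list \<Rightarrow> real" where
  "cond_fun Dn f is x = Min (f ` {y \<in> Dn. \<forall>k<length is. y ! (is ! k) = x ! k})"

end

theory Submission
  imports Defs
begin

lemma ceil_mid_nth: "k < length x \<Longrightarrow> k < length y \<Longrightarrow>
  ceil_mid x y ! k = \<lceil>real_of_int (x!k + y!k) / 2\<rceil>"
  by (simp add: ceil_mid_def)

lemma floor_mid_nth: "k < length x \<Longrightarrow> k < length y \<Longrightarrow>
  floor_mid x y ! k = \<lfloor>real_of_int (x!k + y!k) / 2\<rfloor>"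
  by (simp add: floor_mid_def)

lemma ceil_mid_len: "length (ceil_mid x y) = min (length x) (length y)"
  by (simp add: ceil_mid_def)

lemma floor_mid_len: "length (floor_mid x y) = min (length x) (length y)"
  by (simp add: floor_mid_def)

lemma ceil_int_bounds:
  fixes a b c d :: int
  assumes "a \<le> c" "c \<le> b" "a \<le> d" "d \<le> b"
  shows "\<lceil>real_of_int (c + d) / 2\<rceil> \<in> {a..b}" "\<lfloor>real_of_int (c + d) / 2\<rfloor> \<in> {a..b}"
proof -
  have h1: "real_of_int a \<le> real_of_int (c + d) / 2" using assms by simp
  have h2: "real_of_int (c + d) / 2 \<le> real_of_int b" using assms by simp
  have "real_of_int (c + d) / 2 \<le> \<lceil>real_of_int (c + d) / 2\<rceil>" by (rule le_of_int_ceiling)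
  hence "a \<le> \<lceil>real_of_int (c + d) / 2\<rceil>" using h1 by linarith
  moreover have "\<lceil>real_of_int (c + d) / 2\<rceil> \<le> b" using h2 by (simp add: ceiling_le_iff)
  ultimately show "\<lceil>real_of_int (c + d) / 2\<rceil> \<in> {a..b}" by simp
  have "\<lfloor>real_of_int (c + d) / 2\<rfloor> \<le> real_of_int (c + d) / 2" by (rule of_int_floor_le)
  hence "\<lfloor>real_of_int (c + d) / 2\<rfloor> \<le> b" using h2 by linarith
  moreover have "a \<le> \<lfloor>real_of_int (c + d) / 2\<rfloor>" using h1 by (simp add: le_floor_iff)
  ultimately show "\<lfloor>real_of_int (c + d) / 2\<rfloor> \<in> {a..b}" by simp
qed

lemma ameso_set_prod:
  assumes "\<forall>k<m. \<exists>a b. Es k = {a..b}"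
  shows "ameso_set (prod_dom m Es)"
  unfolding ameso_set_def
proof (intro ballI conjI)
  fix x y assume x: "x \<in> prod_dom m Es" and y: "y \<in> prod_dom m Es"
  have lx: "length x = m" and ly: "length y = m" using x y by (auto simp: prod_dom_def)
  {
    fix k assume k: "k < m"
    obtain a b where ab: "Es k = {a..b}" using assms k by blast
    have "x ! k \<in> {a..b}" "y ! k \<in> {a..b}" using x y k ab by (auto simp: prod_dom_def)
    hence "\<lceil>real_of_int (x!k + y!k) / 2\<rceil> \<in> Es k \<and> \<lfloor>real_of_int (x!k + y!k) / 2\<rfloor> \<in> Es k"
      using ceil_int_bounds[of a "x!k" b "y!k"] ab by auto
  }
  thus "ceil_mid x y \<in> prod_dom m Es" "floor_mid x y \<in> prod_dom m Es"
    using lx ly by (auto simp: prod_dom_def ceil_mid_nth floor_mid_nth ceil_mid_len floor_mid_len)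
qed

theorem mainTheorem10:
  fixes C :: real and n :: nat and Ds :: "nat \<Rightarrow> int set"
    and f :: "int list \<Rightarrow> real" and "is" :: "nat list"
  assumes "C \<ge> 0"
    and "\<forall>k<n. \<exists>a b. a \<le> b \<and> Ds k = {a..b}"
    and "ameso_pair C (prod_dom n Ds) f"
    and "1 \<le> length is" and "length is \<le> n"
    and "distinct is" and "set is \<subseteq> {0..<n}"
  shows "ameso_pair C (prod_dom (length is) (\<lambda>k. Ds (is ! k)))
           (cond_fun (prod_dom n Ds) f is)
       \<and> prod_dom (length is) (\<lambda>k. Ds (is ! k)) \<subseteq> {x. length x = length is}"
proof -
  define Dn where "Dn = prod_dom n Ds"
  define Dl where "Dl = prod_dom (length is) (\<lambda>k. Ds (is ! k))"
  define g where "g = cond_fun Dn f is"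
  define F where "F x = {y \<in> Dn. \<forall>k<length is. y ! (is ! k) = x ! k}" for x
  have g_F: "g x = Min (f ` F x)" for x unfolding g_def F_def cond_fun_def by simp
  have isn: "k < length is \<Longrightarrow> is ! k < n" for k using assms(7) nth_mem by fastforce
  have fin_Dn: "finite Dn"
  proof -
    have "Dn \<subseteq> {xs. set xs \<subseteq> (\<Union>k<n. Ds k) \<and> length xs = n}"
      unfolding Dn_def prod_dom_def by (force simp: in_set_conv_nth)
    moreover have "finite (\<Union>k<n. Ds k)" using assms(2) by auto
    ultimately show ?thesis using finite_lists_length_eq finite_subset by blast
  qed
  have fin_F: "finite (F x)" for x unfolding F_def using fin_Dn by simp
  have ne_F: "F x \<noteq> {}" if x: "x \<in> Dl" for x
  proof -
    define w where "w = map (\<lambda>i. if i \<in> set is then x ! (THE k. k < length is \<and> is ! k = i)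
                                  else (SOME a. a \<in> Ds i)) [0..<n]"
    have the_k: "(THE k. k < length is \<and> is ! k = is ! j) = j" if "j < length is" for j
      using that assms(6) by (auto intro!: the_equality simp: nth_eq_iff_index_eq)
    have lw: "length w = n" unfolding w_def by simp
    have "w \<in> Dn" unfolding Dn_def prod_dom_def
    proof (intro CollectI conjI allI impI)
      show "length w = n" by (fact lw)
      fix i assume i: "i < n"
      show "w ! i \<in> Ds i"
      proof (cases "i \<in> set is")
        case True
        then obtain j where j: "j < length is" "is ! j = i" by (auto simp: in_set_conv_nth)
        have "w ! i = x ! j" using i True j the_k[of j] unfolding w_def by simp
        thus ?thesis using x j unfolding Dl_def prod_dom_def by auto
      next
        case False
        have "Ds i \<noteq> {}" using assms(2) i by fastforce
        hence "(SOME a. a \<in> Ds i) \<in> Ds i" by (simp add: some_in_eq)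
        thus ?thesis using i False unfolding w_def by simp
      qed
    qed
    moreover have "\<forall>k<length is. w ! (is ! k) = x ! k"
      using isn the_k unfolding w_def by auto
    ultimately show ?thesis unfolding F_def by blast
  qed
  have amDn: "ameso_set Dn" and bddf: "bdd_below (f ` Dn)"
    and ineq: "\<forall>x\<in>Dn. \<forall>y\<in>Dn. f x + f y + C \<ge> f (ceil_mid x y) + f (floor_mid x y)"
    using assms(3) unfolding ameso_pair_def Dn_def by auto
  have amDl: "ameso_set Dl" unfolding Dl_def
    by (rule ameso_set_prod) (use assms(2) isn in blast)
  have bdd: "bdd_below (g ` Dl)"
  proof -
    obtain m where m: "\<And>z. z \<in> Dn \<Longrightarrow> m \<le> f z" using bddf by (auto simp: bdd_below_def)
    have "m \<le> g x" if "x \<in> Dl" for x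
    proof -
      have "g x \<in> f ` F x" unfolding g_F using Min_in fin_F ne_F[OF that] by simp
      thus ?thesis using m unfolding F_def by auto
    qed
    thus ?thesis by (auto simp: bdd_below_def)
  qed
  have main: "g x + g y + C \<ge> g (ceil_mid x y) + g (floor_mid x y)"
    if x: "x \<in> Dl" and y: "y \<in> Dl" for x y
  proof -
    have lx: "length x = length is" and ly: "length y = length is"
      using x y unfolding Dl_def prod_dom_def by auto
    have "g x \<in> f ` F x" unfolding g_F using Min_in fin_F ne_F[OF x] by simp
    then obtain u where u: "u \<in> F x" "g x = f u" by auto
    have "g y \<in> f ` F y" unfolding g_F using Min_in fin_F ne_F[OF y] by simp
    then obtain v where v: "v \<in> F y" "g y = f v" by auto
    have uD: "u \<in> Dn" and vD: "v \<in> Dn" using u v unfolding F_def by auto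
    have lu: "length u = n" and lv: "length v = n" using uD vD unfolding Dn_def prod_dom_def by auto
    have "ceil_mid u v \<in> F (ceil_mid x y)"
      unfolding F_def using amDn uD vD u v lu lv lx ly isn
      by (auto simp: ameso_set_def ceil_mid_nth F_def)
    hence c: "g (ceil_mid x y) \<le> f (ceil_mid u v)" unfolding g_F using fin_F by simp
    have "floor_mid u v \<in> F (floor_mid x y)"
      unfolding F_def using amDn uD vD u v lu lv lx ly isn
      by (auto simp: ameso_set_def floor_mid_nth F_def)
    hence d: "g (floor_mid x y) \<le> f (floor_mid u v)" unfolding g_F using fin_F by simp
    show ?thesis using ineq uD vD c d u(2) v(2) by fastforce
  qed
  have "ameso_pair C Dl g" unfolding ameso_pair_def using amDl bdd main by blast
  moreover have "Dl \<subseteq> {x. length x = length is}" unfolding Dl_def prod_dom_def by auto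
  ultimately show ?thesis unfolding Dl_def g_def Dn_def by simp
qed

end
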